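(* Let $n\geq 3$ and let $S_n$ be the star graph with vertices $a_1,\dots,a_n$ and center $a_1$. For every $f:V\to\mathbb{R}$, $${\rm Var}_2 M_{S_n}f\leq \frac{\left((n-1)^2+n-2\right)^{1/2}}{n}\,{\rm Var}_2 f.$$ Moreover, the constant $\frac{((n-1)^2+n-2)^{1/2}}{n}$ is optimal, i.e. it cannot be replaced by any smaller constant.
   Context: For a finite connected graph $G=(V,E)$ with graph distance $d_G$ and $f:V\to\mathbb{R}$, $M_Gf(v)=\sup_{r\geq 0}\frac{1}{|B(v,r)|}\sum_{u\in B(v,r)}|f(u)|$, where $B(v,r)=\{u\in V: d_G(u,v)\le r\}$. For $g:V\to\mathbb{R}$ and $p>0$, ${\rm Var}_p g=\left(\sum_{\{v_1,v_2\}\in E}|g(v_1)-g(v_2)|^p\right)^{1/p}$. The star graph $S_n$ has vertex set $V=\{a_1,\dots,a_n\}$ and edges exactly between $a_1$ and each $a_i$, $i\ge 2$. *)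

theory Defs
  imports "HOL-Analysis.Analysis"
begin

text \<open>Simple graphs: a vertex set V and an edge set E of 2-element subsets of V.\<close>

definition is_walk :: "'a set set \<Rightarrow> 'a list \<Rightarrow> bool" where
  "is_walk E xs \<longleftrightarrow> xs \<noteq> [] \<and> (\<forall>i. Suc i < length xs \<longrightarrow> {xs ! i, xs ! Suc i} \<in> E)"

definition graph_dist :: "'a set set \<Rightarrow> 'a \<Rightarrow> 'a \<Rightarrow> nat" where
  "graph_dist E u v = (LEAST k. \<exists>xs. is_walk E xs \<and> length xs = Suc k \<and> hd xs = u \<and> last xs = v)"

definition graph_ball :: "'a set \<Rightarrow> 'a set set \<Rightarrow> 'a \<Rightarrow> real \<Rightarrow> 'a set" where
  "graph_ball V E v r = {u \<in> V. real (graph_dist E u v) \<le> r}"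

definition maximal_op :: "'a set \<Rightarrow> 'a set set \<Rightarrow> ('a \<Rightarrow> real) \<Rightarrow> 'a \<Rightarrow> real" where
  "maximal_op V E f v =
     (SUP r \<in> {0..}. (\<Sum>u \<in> graph_ball V E v r. \<bar>f u\<bar>) / real (card (graph_ball V E v r)))"

definition edge_diff :: "('a \<Rightarrow> real) \<Rightarrow> 'a set \<Rightarrow> real" where
  "edge_diff g e = (THE d. \<exists>a b. e = {a, b} \<and> d = \<bar>g a - g b\<bar>)"

definition var_p :: "'a set set \<Rightarrow> real \<Rightarrow> ('a \<Rightarrow> real) \<Rightarrow> real" where
  "var_p E p g = (\<Sum>e \<in> E. edge_diff g e powr p) powr (1 / p)"

text \<open>Star graph S_n on vertices a_1..a_n, represented as 1..n, centre 1.\<close>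
definition star_V :: "nat \<Rightarrow> nat set" where
  "star_V n = {1..n}"

definition star_E :: "nat \<Rightarrow> nat set set" where
  "star_E n = {{1, i} | i. i \<in> {2..n}}"

end

theory Submission
  imports Defs
begin


lemma sum_sq_le_sq_sum:
  fixes f :: "'a \<Rightarrow> real"
  assumes "finite S" "\<And>i. i \<in> S \<Longrightarrow> f i \<ge> 0"
  shows "(\<Sum>i\<in>S. (f i)^2) \<le> (\<Sum>i\<in>S. f i)^2"
  using assms
proof (induction S rule: finite_induct)
  case empty then show ?case by simp
next
  case (insert x F)
  have "sum f F \<ge> 0" using insert by (simp add: sum_nonneg)
  moreover have "f x \<ge> 0" using insert by simp
  ultimately have "0 \<le> 2 * f x * sum f F" by simp
  then show ?case using insert by (simp add: power2_eq_square algebra_simps)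
qed

lemma key1:
  fixes x y q K j r :: real
  assumes "r > 0" "j > 0" "K = j*r + 1" "y^2 \<le> r * q" "x \<ge> 0" "y \<ge> 0" "q \<ge> 0"
  shows "j * x^2 \<le> K * (q + j*(x-y)^2)"
proof -
  have "(j*r) * x^2 \<le> K * (y^2 + (j*r)*(x-y)^2)"
  proof -
    have "K * (y^2 + (j*r)*(x-y)^2) - (j*r) * x^2 = ((j*r)*x - ((j*r)+1)*y)^2"
      using assms(3) by (simp add: power2_eq_square algebra_simps)
    then show ?thesis by (smt (verit) zero_le_power2)
  qed
  also have "\<dots> \<le> K * (r*q + (j*r)*(x-y)^2)" using assms by (intro mult_left_mono) auto
  finally have "r * (j * x^2) \<le> r * (K * (q + j*(x-y)^2))"
    by (simp add: algebra_simps)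
  then show ?thesis using assms(1) by simp
qed

lemma key2:
  fixes x y p q T K m n :: real
  assumes "n \<ge> 3" "K = n^2 - n - 1" "m > 0" "m \<le> n - 2" "0 \<le> x" "x \<le> y"
    "p \<le> x^2" "y^2 \<le> m * q" "n^2 * T \<le> m * (y - x)^2" "q \<ge> 0"
  shows "(n+1) * p + n^2 * T \<le> K * q"
proof -
  have "n*n \<ge> 3*n" using assms(1) by (intro mult_right_mono) auto
  then have K0: "K \<ge> 0" using assms(1,2) unfolding power2_eq_square by linarith
  have h1: "m*(n+1)*x^2 + m^2*(y-x)^2 \<le> (n-2)*(n+1)*x^2 + (n-2)^2*(y-x)^2"
  proof -
    have a: "m*(n+1)*x^2 \<le> (n-2)*(n+1)*x^2" using assms(1,4)
      by (intro mult_right_mono) auto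
    have "m^2 \<le> (n-2)^2" using assms(3,4) by (intro power_mono) auto
    then have b: "m^2*(y-x)^2 \<le> (n-2)^2*(y-x)^2" by (intro mult_right_mono) auto
    from a b show ?thesis by linarith
  qed
  have h2: "(n-2)*(n+1)*x^2 + (n-2)^2*(y-x)^2 \<le> K * y^2"
  proof -
    have "K * y^2 - ((n-2)*(n+1)*x^2 + (n-2)^2*(y-x)^2) = x^2 + 2*K*x*(y-x) + (3*n-5)*(y-x)^2"
      unfolding assms(2) by (simp add: power2_eq_square algebra_simps)
    moreover note K0
    moreover have "x*(y-x) \<ge> 0" using assms(5,6) by simp
    moreover have "(3*n-5)*(y-x)^2 \<ge> 0" using assms(1) by simp
    moreover have "2*K*x*(y-x) = 2*K*(x*(y-x))" by simp
    moreover have "2*K*(x*(y-x)) \<ge> 0" using K0 \<open>x*(y-x) \<ge> 0\<close> by simp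
    ultimately show ?thesis by (smt (verit) zero_le_power2)
  qed
  have "m * ((n+1) * p + n^2 * T) \<le> m*(n+1)*x^2 + m^2*(y-x)^2"
  proof -
    have "(n+1) * p \<le> (n+1)*x^2" using assms(1,7) by (intro mult_left_mono) auto
    then have "m * ((n+1) * p) \<le> m*((n+1)*x^2)" using assms(3) by (simp add: mult_left_mono)
    moreover have "m * (n^2 * T) \<le> m*(m*(y-x)^2)" using assms(3,9)
      by (intro mult_left_mono) auto
    moreover have "m*(m*(y-x)^2) = m^2*(y-x)^2" by (simp add: power2_eq_square)
    ultimately show ?thesis by (simp add: algebra_simps)
  qed
  also have "\<dots> \<le> K * y^2" using h1 h2 by linarith
  also have "\<dots> \<le> K * (m * q)" using assms(8) K0 by (simp add: mult_left_mono)
  also have "\<dots> = m * (K * q)" by simp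
  finally have "m * ((n+1) * p + n^2 * T) \<le> m * (K * q)" .
  then show ?thesis using assms(3) by (rule mult_left_le_imp_le)
qed


lemma main_ineq:
  fixes a :: real and b :: "nat \<Rightarrow> real" and n :: nat
  assumes n3: "n \<ge> 3"
  defines "A \<equiv> (a + (\<Sum>i=2..n. b i)) / real n"
  shows "(\<Sum>i=2..n. (max a A - max (b i) (max ((a + b i)/2) A))^2)
     \<le> ((real n)^2 - real n - 1)/(real n)^2 * (\<Sum>i=2..n. (a - b i)^2)"
proof -
  define L where "L = {2..n}"
  define K where "K = (real n)^2 - real n - 1"
  define S where "S = (\<Sum>i\<in>L. (a - b i)^2)"
  define LHS where "LHS = (\<Sum>i\<in>L. (max a A - max (b i) (max ((a + b i)/2) A))^2)"
  have finL: "finite L" unfolding L_def by simp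
  have cardL: "real (card L) = real n - 1" unfolding L_def using n3 by simp
  have n0: "real n > 0" using n3 by simp
  have nA: "real n * A = a + (\<Sum>i\<in>L. b i)" unfolding A_def L_def using n0 by simp
  have rn3: "real n \<ge> 3" using n3 by simp
  have nc: "real n = real (card L) + 1" using cardL by simp
  have nA': "sum b L = real (card L) * A + A - a" using nA unfolding nc by (simp add: algebra_simps)
  have nn: "real n * real n \<ge> 3 * real n" using rn3 by (intro mult_right_mono) auto
  have K0: "K \<ge> 0" unfolding K_def power2_eq_square using rn3 nn by linarith
  have Kn: "(real n)^2 = K + real n + 1" unfolding K_def by simp
  have K4: "(real n)^2 \<le> 4 * K"
  proof -
    have "3*(real n * real n) - 4*real n - 4 \<ge> 0" using nn rn3 by linarith
    then show ?thesis unfolding K_def power2_eq_square by simp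
  qed
  have S0: "S \<ge> 0" unfolding S_def by (simp add: sum_nonneg)
  have main: "(real n)^2 * LHS \<le> K * S"
  proof (cases "a \<le> A")
    case True
    define e where "e i = b i - A" for i
    have sumE: "(\<Sum>i\<in>L. e i) = A - a"
      unfolding e_def using nA' by (simp add: sum_subtractf algebra_simps)
    have "(\<Sum>i\<in>L. (a - b i)^2) = (\<Sum>i\<in>L. (e i)^2 + 2*(A-a)*e i + (A-a)^2)"
      by (rule sum.cong) (auto simp: e_def power2_eq_square algebra_simps)
    also have "\<dots> = (\<Sum>i\<in>L. (e i)^2) + 2*(A-a)*(\<Sum>i\<in>L. e i) + real (card L)*(A-a)^2"
      by (simp add: sum.distrib sum_distrib_left)
    finally have Seq: "S = (\<Sum>i\<in>L. (e i)^2) + (real n + 1)*(A-a)^2"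
      unfolding S_def using sumE cardL by (simp add: power2_eq_square algebra_simps)
    define P where "P = {i\<in>L. e i > 0}"
    define Q where "Q = {i\<in>L. \<not> e i > 0}"
    have PQ: "L = P \<union> Q" "P \<inter> Q = {}" unfolding P_def Q_def by auto
    have finP: "finite P" and finQ: "finite Q" using finL PQ by auto
    have "LHS = (\<Sum>i\<in>L. (if e i > 0 then (e i)^2 else 0))"
      unfolding LHS_def
    proof (rule sum.cong)
      fix i assume "i \<in> L"
      have "max (b i) (max ((a + b i)/2) A) = max (b i) A" using True by (simp add: max_def)
      then show "(max a A - max (b i) (max ((a + b i)/2) A))^2 = (if e i > 0 then (e i)^2 else 0)"
        using True by (auto simp: e_def max_def power2_eq_square algebra_simps)
    qed simp
    also have "\<dots> = (\<Sum>i\<in>P. (if e i > 0 then (e i)^2 else 0)) + (\<Sum>i\<in>Q. (if e i > 0 then (e i)^2 else 0))"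
      using PQ finP finQ by (simp add: sum.union_disjoint)
    also have "\<dots> = (\<Sum>i\<in>P. (e i)^2)" unfolding P_def Q_def by simp
    finally have LHSe: "LHS = (\<Sum>i\<in>P. (e i)^2)" .
    show ?thesis
    proof (cases "P = {}")
      case True
      then show ?thesis using LHSe K0 S0 by simp
    next
      case False
      then have "card P \<ge> 1" using finP by (simp add: Suc_le_eq card_gt_0_iff)
      moreover have "card P + card Q = card L" using PQ finP finQ by (simp add: card_Un_disjoint)
      ultimately have cQ: "real (card Q) \<le> real n - 2" using cardL by linarith
      define p where "p = (\<Sum>i\<in>P. (e i)^2)"
      define q where "q = (\<Sum>i\<in>Q. (e i)^2)"
      define x where "x = (\<Sum>i\<in>P. e i)"
      define y where "y = - (\<Sum>i\<in>Q. e i)"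
      have x0: "x \<ge> 0" unfolding x_def P_def by (intro sum_nonneg) auto
      have y0: "y \<ge> 0" unfolding y_def Q_def using sum_nonpos[of "{i \<in> L. \<not> 0 < e i}" e] by fastforce
      have q0: "q \<ge> 0" unfolding q_def by (simp add: sum_nonneg)
      have px: "p \<le> x^2" unfolding p_def x_def using finP
        by (intro sum_sq_le_sq_sum) (auto simp: P_def)
      have "y^2 \<le> q * real (card Q)" unfolding y_def q_def
        using sum_squared_le_sum_of_squares[of e Q] by simp
      also have "\<dots> \<le> q * (real n - 2)" using cQ q0 by (intro mult_left_mono) auto
      finally have yq: "y^2 \<le> (real n - 2) * q" by (simp add: mult.commute)
      have Le: "(\<Sum>i\<in>L. e i) = x - y" unfolding x_def y_def using PQ finP finQ
        by (simp add: sum.union_disjoint)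
      have L2: "(\<Sum>i\<in>L. (e i)^2) = p + q" unfolding p_def q_def using PQ finP finQ
        by (simp add: sum.union_disjoint)
      have k: "(real n + 1) * x^2 \<le> K * (q + (real n + 1) * (x - y)^2)"
        by (rule key1[where r = "real n - 2"]) (use rn3 yq x0 y0 q0 in \<open>auto simp: K_def power2_eq_square algebra_simps\<close>)
      have "(real n + 1) * p \<le> (real n + 1) * x^2" using px by (intro mult_left_mono) auto
      then have "(real n)^2 * p \<le> K * (p + q + (real n + 1) * (x - y)^2)"
        using k Kn by (simp add: algebra_simps)
      then show ?thesis using LHSe Seq L2 Le sumE unfolding p_def by simp
    qed
  next
    case False
    then have aA: "A < a" by simp
    define P where "P = {i\<in>L. b i \<ge> a}"
    define Q where "Q = {i\<in>L. b i < a}"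
    have PQ: "L = P \<union> Q" "P \<inter> Q = {}" unfolding P_def Q_def by auto
    have finP: "finite P" and finQ: "finite Q" using finL PQ by auto
    define t where "t i = (max a A - max (b i) (max ((a + b i)/2) A))^2" for i
    have tP: "t i = (a - b i)^2" if "i \<in> P" for i
      using that aA unfolding t_def P_def by (simp add: max_def)
    have tQ1: "t i \<le> (a - A)^2" if "i \<in> Q" for i
    proof -
      have "b i < a" using that unfolding Q_def by simp
      then have "A \<le> max (b i) (max ((a + b i)/2) A)" "max (b i) (max ((a + b i)/2) A) \<le> a"
        using aA by auto
      then show ?thesis unfolding t_def using aA by (intro power_mono) auto
    qed
    have tQ2: "t i \<le> (a - b i)^2 / 4" if "i \<in> Q" for i
    proof -
      have "b i < a" using that unfolding Q_def by simp
      have "(a + b i)/2 \<le> max (b i) (max ((a + b i)/2) A)" by (simp add: le_max_iff_disj)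
      moreover have "max (b i) (max ((a + b i)/2) A) \<le> a" using aA \<open>b i < a\<close> by auto
      ultimately have "(a + b i)/2 \<le> max (b i) (max ((a + b i)/2) A)" "max (b i) (max ((a + b i)/2) A) \<le> a"
        by auto
      then have "t i \<le> (a - (a + b i)/2)^2" unfolding t_def using aA by (intro power_mono) auto
      also have "\<dots> = (a - b i)^2/4" by (simp add: power2_eq_square field_simps)
      finally show ?thesis .
    qed
    define p where "p = (\<Sum>i\<in>P. (a - b i)^2)"
    define q where "q = (\<Sum>i\<in>Q. (a - b i)^2)"
    define T where "T = (\<Sum>i\<in>Q. t i)"
    have LHSe: "LHS = p + T" unfolding LHS_def p_def T_def using PQ finP finQ tP
      by (simp add: sum.union_disjoint t_def[symmetric])
    have Se: "S = p + q" unfolding S_def p_def q_def using PQ finP finQ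
        by (simp add: sum.union_disjoint)
    have q0: "q \<ge> 0" unfolding q_def by (simp add: sum_nonneg)
    have T0: "T \<ge> 0" unfolding T_def t_def by (simp add: sum_nonneg)
    have T1: "T \<le> real (card Q) * (a - A)^2" unfolding T_def
      using sum_mono[of Q t "\<lambda>_. (a - A)^2"] tQ1 by simp
    have T2: "T \<le> q / 4" unfolding T_def q_def
      using sum_mono[of Q t "\<lambda>i. (a - b i)^2 / 4"] tQ2 by (simp add: sum_divide_distrib)
    show ?thesis
    proof (cases "P = {}")
      case True
      then have "p = 0" unfolding p_def by simp
      have "(real n)^2 * T \<le> (4*K) * (q/4)"
        using T2 K4 q0 T0 by (intro mult_mono) (auto simp: K0)
      then show ?thesis using LHSe Se \<open>p = 0\<close> by simp
    next
      case False
      then have "card P \<ge> 1" using finP by (simp add: Suc_le_eq card_gt_0_iff)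
      moreover have "card P + card Q = card L" using PQ finP finQ by (simp add: card_Un_disjoint)
      ultimately have cQ: "real (card Q) \<le> real n - 2" using cardL by linarith
      define x where "x = (\<Sum>i\<in>P. b i - a)"
      define y where "y = (\<Sum>i\<in>Q. a - b i)"
      have x0: "x \<ge> 0" unfolding x_def P_def by (intro sum_nonneg) auto
      have "(\<Sum>i\<in>L. b i - a) = x + (\<Sum>i\<in>Q. b i - a)" unfolding x_def using PQ finP finQ
        by (simp add: sum.union_disjoint)
      moreover have "(\<Sum>i\<in>Q. b i - a) = - y" unfolding y_def
        by (simp add: sum_negf[symmetric])
      ultimately have "(\<Sum>i\<in>L. b i - a) = x - y" by simp
      moreover have "(\<Sum>i\<in>L. b i - a) = real n * (A - a)"
        using nA' unfolding nc by (simp add: sum_subtractf algebra_simps)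
      ultimately have yx: "y - x = real n * (a - A)" by (simp add: algebra_simps)
      moreover have "real n * (a - A) > 0" using aA n0 by simp
      ultimately have "y > x" by linarith
      have m0: "card Q > 0"
      proof (rule ccontr)
        assume "\<not> card Q > 0"
        then have "Q = {}" using finQ by simp
        then have "y = 0" unfolding y_def by simp
        then show False using x0 \<open>y > x\<close> by simp
      qed
      have px: "p \<le> x^2"
      proof -
        have "p = (\<Sum>i\<in>P. (b i - a)^2)" unfolding p_def
          by (rule sum.cong) (auto simp: power2_eq_square algebra_simps)
        also have "\<dots> \<le> x^2" unfolding x_def using finP
          by (intro sum_sq_le_sq_sum) (auto simp: P_def)
        finally show ?thesis .
      qed
      have yq: "y^2 \<le> real (card Q) * q" unfolding y_def q_def
        using sum_squared_le_sum_of_squares[of "\<lambda>i. a - b i" Q] by (simp add: mult.commute)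
      have "(real n)^2 * T \<le> (real n)^2 * (real (card Q) * (a - A)^2)"
        using T1 by (intro mult_left_mono) auto
      also have "\<dots> = real (card Q) * (real n * (a - A))^2" by (simp add: power_mult_distrib)
      also have "\<dots> = real (card Q) * (y - x)^2" using yx by simp
      finally have Tb: "(real n)^2 * T \<le> real (card Q) * (y - x)^2" .
      have "(real n + 1) * p + (real n)^2 * T \<le> K * q"
        by (rule key2[where m = "real (card Q)" and x = x and y = y])
          (use rn3 K_def m0 cQ x0 \<open>y > x\<close> px yq Tb q0 in auto)
      then show ?thesis using LHSe Se Kn by (simp add: algebra_simps)
    qed
  qed
  have "LHS \<le> K * S / (real n)^2" using main n0 by (simp add: pos_le_divide_eq mult.commute)
  then show ?thesis unfolding LHS_def S_def K_def L_def by simp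
qed



lemma Sup2: "Sup {x, y::real} = max x y"
  by (simp add: cSup_insert_If sup_max)

lemma Sup3: "Sup {x, y, z::real} = max x (max y z)"
  by (simp add: cSup_insert_If sup_max)

lemma walk_len1: "length xs = 1 \<Longrightarrow> hd xs = last xs"
  by (cases xs) auto

lemma walk_len2: "length xs = 2 \<Longrightarrow> is_walk E xs \<Longrightarrow> {hd xs, last xs} \<in> E"
proof -
  assume l: "length xs = 2" and w: "is_walk E xs"
  then have "{xs ! 0, xs ! Suc 0} \<in> E" unfolding is_walk_def by auto
  moreover obtain p q where "xs = [p, q]" using l by (auto simp: numeral_2_eq_2 length_Suc_conv)
  ultimately show ?thesis by simp
qed

lemma dist_self: "graph_dist E u u = 0"
  unfolding graph_dist_def
  by (rule Least_eq_0) (rule exI[of _ "[u]"], simp add: is_walk_def)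

lemma dist_one: "u \<noteq> v \<Longrightarrow> {u,v} \<in> E \<Longrightarrow> graph_dist E u v = 1"
  unfolding graph_dist_def
proof (rule Least_equality)
  assume "{u,v} \<in> E"
  then show "\<exists>xs. is_walk E xs \<and> length xs = Suc 1 \<and> hd xs = u \<and> last xs = v"
    by (intro exI[of _ "[u,v]"]) (auto simp: is_walk_def less_Suc_eq)
next
  fix m assume "u \<noteq> v" "\<exists>xs. is_walk E xs \<and> length xs = Suc m \<and> hd xs = u \<and> last xs = v"
  then show "1 \<le> m" using walk_len1 by (cases m) force+
qed

lemma dist_two: "u \<noteq> v \<Longrightarrow> {u,v} \<notin> E \<Longrightarrow> {u,w} \<in> E \<Longrightarrow> {w,v} \<in> E \<Longrightarrow> graph_dist E u v = 2"
  unfolding graph_dist_def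
proof (rule Least_equality)
  assume "{u,w} \<in> E" "{w,v} \<in> E"
  then show "\<exists>xs. is_walk E xs \<and> length xs = Suc 2 \<and> hd xs = u \<and> last xs = v"
    by (intro exI[of _ "[u,w,v]"]) (auto simp: is_walk_def less_Suc_eq)
next
  fix m assume "u \<noteq> v" "{u,v} \<notin> E" "\<exists>xs. is_walk E xs \<and> length xs = Suc m \<and> hd xs = u \<and> last xs = v"
  then obtain xs where xs: "is_walk E xs" "length xs = Suc m" "hd xs = u" "last xs = v" by blast
  show "2 \<le> m"
  proof (rule ccontr)
    assume "\<not> 2 \<le> m"
    then have "m = 0 \<or> m = 1" by auto
    then show False
    proof
      assume "m = 0" then show False using xs walk_len1 \<open>u \<noteq> v\<close> by force
    next
      assume "m = 1" then show False using xs walk_len2[of xs E] \<open>{u,v} \<notin> E\<close> by simp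
    qed
  qed
qed

lemma star_edge: "i \<in> {2..n} \<Longrightarrow> {1, i} \<in> star_E n"
  unfolding star_E_def by auto

lemma star_nonedge: "i \<in> {2..n} \<Longrightarrow> j \<in> {2..n} \<Longrightarrow> {i, j} \<notin> star_E n"
  unfolding star_E_def by (auto simp: doubleton_eq_iff)

lemma dist_star:
  assumes "u \<in> {1..n}" "v \<in> {1..n}"
  shows "graph_dist (star_E n) u v = (if u = v then 0 else if u = 1 \<or> v = 1 then 1 else 2)"
proof -
  consider "u = v" | "u \<noteq> v" "u = 1" | "u \<noteq> v" "v = 1" | "u \<noteq> v" "u \<noteq> 1" "v \<noteq> 1" by blast
  then show ?thesis
  proof cases
    case 1 then show ?thesis by (simp add: dist_self)
  next
    case 2 then show ?thesis using assms star_edge[of v n] by (simp add: dist_one)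
  next
    case 3 then show ?thesis using assms star_edge[of u n] by (simp add: dist_one insert_commute)
  next
    case 4
    then have "u \<in> {2..n}" "v \<in> {2..n}" using assms by auto
    then show ?thesis using 4 star_edge[of u n] star_edge[of v n] star_nonedge[of u n v]
      by (simp add: dist_two[of u v _ 1] insert_commute)
  qed
qed

lemma ball_center:
  assumes "r \<ge> 0" and n1: "n \<ge> 1"
  shows "graph_ball (star_V n) (star_E n) 1 r = (if r < 1 then {1} else {1..n})"
  unfolding graph_ball_def star_V_def using assms n1
  by (auto simp: dist_star split: if_splits)

lemma ball_leaf:
  assumes "r \<ge> 0" "i \<in> {2..n}"
  shows "graph_ball (star_V n) (star_E n) i r = (if r < 1 then {i} else if r < 2 then {1, i} else {1..n})"
  unfolding graph_ball_def star_V_def using assms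
  by (auto simp: dist_star split: if_splits)


lemma edge_diff_pair: "edge_diff g {x, y} = \<bar>g x - g y\<bar>"
  unfolding edge_diff_def
  by (rule the_equality) (auto simp: doubleton_eq_iff abs_minus_commute)

lemma abs_powr2: "\<bar>x::real\<bar> powr 2 = x^2"
proof (cases "x = 0")
  case True then show ?thesis by simp
next
  case False then show ?thesis by (simp add: powr_numeral)
qed

lemma var_star: "var_p (star_E n) 2 g = sqrt (\<Sum>i=2..n. (g 1 - g i)^2)"
proof -
  have E: "star_E n = (\<lambda>i. {1, i}) ` {2..n}" unfolding star_E_def by auto
  have inj: "inj_on (\<lambda>i. {1::nat, i}) {2..n}"
    by (rule inj_onI) (auto simp: doubleton_eq_iff)
  have "(\<Sum>e\<in>star_E n. edge_diff g e powr 2) = (\<Sum>i=2..n. (g 1 - g i)^2)"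
    unfolding E using inj by (simp add: sum.reindex edge_diff_pair abs_powr2)
  moreover have "(\<Sum>i=2..n. (g 1 - g i)^2) \<ge> 0" by (simp add: sum_nonneg)
  ultimately show ?thesis unfolding var_p_def by (simp add: powr_half_sqrt)
qed

definition avg :: "(nat \<Rightarrow> real) \<Rightarrow> nat set \<Rightarrow> real" where
  "avg f S = (\<Sum>u\<in>S. \<bar>f u\<bar>) / real (card S)"

lemma avg_all: "n \<ge> 2 \<Longrightarrow> avg f {1..n} = (\<bar>f 1\<bar> + (\<Sum>i=2..n. \<bar>f i\<bar>)) / real n"
  unfolding avg_def by (simp add: sum.atLeast_Suc_atMost numeral_2_eq_2)

lemma M_center:
  assumes "n \<ge> 2"
  shows "maximal_op (star_V n) (star_E n) f 1 = max \<bar>f 1\<bar> ((\<bar>f 1\<bar> + (\<Sum>i=2..n. \<bar>f i\<bar>)) / real n)"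
proof -
  have "(\<lambda>r. avg f (graph_ball (star_V n) (star_E n) 1 r)) ` {0..}
      = (\<lambda>r::real. avg f (if r < 1 then {1} else {1..n})) ` {0..}"
  proof (rule image_cong)
    fix r :: real assume "r \<in> {0..}"
    then show "avg f (graph_ball (star_V n) (star_E n) 1 r) = avg f (if r < 1 then {1} else {1..n})"
      using ball_center[of r n] assms by simp
  qed simp
  also have "\<dots> = {avg f {1}, avg f {1..n}}"
  proof (rule set_eqI, rule iffI)
    fix z assume "z \<in> (\<lambda>r::real. avg f (if r < 1 then {1} else {1..n})) ` {0..}"
    then show "z \<in> {avg f {1}, avg f {1..n}}" by auto
  next
    fix z assume z: "z \<in> {avg f {1}, avg f {1..n}}"
    have "avg f {1} \<in> (\<lambda>r::real. avg f (if r < 1 then {1} else {1..n})) ` {0..}"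
      by (rule image_eqI[where x = 0]) auto
    moreover have "avg f {1..n} \<in> (\<lambda>r::real. avg f (if r < 1 then {1} else {1..n})) ` {0..}"
      by (rule image_eqI[where x = 1]) auto
    ultimately show "z \<in> (\<lambda>r::real. avg f (if r < 1 then {1} else {1..n})) ` {0..}" using z by auto
  qed
  finally have img: "(\<lambda>r. avg f (graph_ball (star_V n) (star_E n) 1 r)) ` {0..} = {avg f {1}, avg f {1..n}}" .
  have "maximal_op (star_V n) (star_E n) f 1 = Sup ((\<lambda>r. avg f (graph_ball (star_V n) (star_E n) 1 r)) ` {0..})"
    unfolding maximal_op_def avg_def by simp
  also have "\<dots> = max (avg f {1}) (avg f {1..n})" unfolding img Sup2 ..
  moreover have "avg f {1..n} = (\<bar>f 1\<bar> + (\<Sum>i=2..n. \<bar>f i\<bar>)) / real n"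
    using assms by (rule avg_all)
  moreover have "avg f {1} = \<bar>f 1\<bar>" by (simp add: avg_def)
  ultimately show ?thesis by simp
qed

lemma M_leaf:
  assumes "n \<ge> 2" "i \<in> {2..n}"
  shows "maximal_op (star_V n) (star_E n) f i
     = max \<bar>f i\<bar> (max ((\<bar>f 1\<bar> + \<bar>f i\<bar>)/2) ((\<bar>f 1\<bar> + (\<Sum>i=2..n. \<bar>f i\<bar>)) / real n))"
proof -
  let ?h = "\<lambda>r::real. avg f (if r < 1 then {i} else if r < 2 then {1, i} else {1..n})"
  have "(\<lambda>r. avg f (graph_ball (star_V n) (star_E n) i r)) ` {0..} = ?h ` {0..}"
    by (rule image_cong) (use assms in \<open>auto simp: ball_leaf\<close>)
  also have "\<dots> = {avg f {i}, avg f {1, i}, avg f {1..n}}"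
  proof (rule set_eqI, rule iffI)
    fix z assume "z \<in> ?h ` {0..}"
    then show "z \<in> {avg f {i}, avg f {1, i}, avg f {1..n}}" by auto
  next
    fix z assume z: "z \<in> {avg f {i}, avg f {1, i}, avg f {1..n}}"
    have "avg f {i} \<in> ?h ` {0..}" by (rule image_eqI[where x = 0]) auto
    moreover have "avg f {1, i} \<in> ?h ` {0..}" by (rule image_eqI[where x = 1]) auto
    moreover have "avg f {1..n} \<in> ?h ` {0..}" by (rule image_eqI[where x = 2]) auto
    ultimately show "z \<in> ?h ` {0..}" using z by auto
  qed
  finally have img: "(\<lambda>r. avg f (graph_ball (star_V n) (star_E n) i r)) ` {0..} = {avg f {i}, avg f {1, i}, avg f {1..n}}" .
  have "maximal_op (star_V n) (star_E n) f i = Sup ((\<lambda>r. avg f (graph_ball (star_V n) (star_E n) i r)) ` {0..})"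
    unfolding maximal_op_def avg_def by simp
  also have "\<dots> = max (avg f {i}) (max (avg f {1, i}) (avg f {1..n}))" unfolding img Sup3 ..
  finally have X: "maximal_op (star_V n) (star_E n) f i = max (avg f {i}) (max (avg f {1, i}) (avg f {1..n}))" .
  have a1: "avg f {1..n} = (\<bar>f 1\<bar> + (\<Sum>i=2..n. \<bar>f i\<bar>)) / real n"
    using assms(1) by (rule avg_all)
  have a2: "avg f {i} = \<bar>f i\<bar>" by (simp add: avg_def)
  have a3: "avg f {1, i} = (\<bar>f 1\<bar> + \<bar>f i\<bar>)/2" using assms(2) by (simp add: avg_def)
  show ?thesis unfolding X a1 a2 a3 ..
qed



lemma sqrt_factor: "n > 0 \<Longrightarrow> K \<ge> 0 \<Longrightarrow> sqrt K / n * sqrt Y = sqrt (K / n^2 * Y)"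
  by (simp add: real_sqrt_mult real_sqrt_divide)

theorem theorem4p2:
  fixes n :: nat
  assumes "n \<ge> 3"
  shows "(\<forall>f :: nat \<Rightarrow> real.
            var_p (star_E n) 2 (maximal_op (star_V n) (star_E n) f)
              \<le> sqrt ((real n - 1)^2 + real n - 2) / real n * var_p (star_E n) 2 f)
       \<and> (\<forall>C :: real. C < sqrt ((real n - 1)^2 + real n - 2) / real n \<longrightarrow>
            (\<exists>f :: nat \<Rightarrow> real.
               var_p (star_E n) 2 (maximal_op (star_V n) (star_E n) f)
                 > C * var_p (star_E n) 2 f))"
proof -
  have n2: "n \<ge> 2" using assms by simp
  have n0: "real n > 0" using assms by simp
  have rn3: "real n \<ge> 3" using assms by simp
  have Keq: "(real n - 1)^2 + real n - 2 = (real n)^2 - real n - 1" by (simp add: power2_eq_square algebra_simps)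
  have nn: "real n * real n \<ge> 3 * real n" using rn3 by (intro mult_right_mono) auto
  have K0: "(real n)^2 - real n - 1 \<ge> 0" unfolding power2_eq_square using nn rn3 by linarith
  have part1: "var_p (star_E n) 2 (maximal_op (star_V n) (star_E n) f)
              \<le> sqrt ((real n - 1)^2 + real n - 2) / real n * var_p (star_E n) 2 f" for f :: "nat \<Rightarrow> real"
  proof -
    define a where "a = \<bar>f 1\<bar>"
    define b where "b i = \<bar>f i\<bar>" for i
    define A where "A = (a + (\<Sum>i=2..n. b i)) / real n"
    let ?M = "maximal_op (star_V n) (star_E n) f"
    have M1: "?M 1 = max a A" unfolding a_def A_def b_def using M_center[OF n2] by simp
    have Mi: "?M i = max (b i) (max ((a + b i)/2) A)" if "i \<in> {2..n}" for i
      unfolding a_def A_def b_def using M_leaf[OF n2 that] by simp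
    have "(\<Sum>i=2..n. (?M 1 - ?M i)^2) = (\<Sum>i=2..n. (max a A - max (b i) (max ((a + b i)/2) A))^2)"
      unfolding M1 by (rule sum.cong) (simp_all add: Mi)
    also have "\<dots> \<le> ((real n)^2 - real n - 1)/(real n)^2 * (\<Sum>i=2..n. (a - b i)^2)"
      unfolding A_def by (rule main_ineq[OF assms])
    also have "\<dots> \<le> ((real n)^2 - real n - 1)/(real n)^2 * (\<Sum>i=2..n. (f 1 - f i)^2)"
    proof (rule mult_left_mono)
      show "(\<Sum>i=2..n. (a - b i)^2) \<le> (\<Sum>i=2..n. (f 1 - f i)^2)"
      proof (rule sum_mono)
        fix i
        have "\<bar>a - b i\<bar> \<le> \<bar>f 1 - f i\<bar>" unfolding a_def b_def by (rule abs_triangle_ineq3)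
        then have "\<bar>a - b i\<bar>^2 \<le> \<bar>f 1 - f i\<bar>^2" by (intro power_mono) auto
        then show "(a - b i)^2 \<le> (f 1 - f i)^2" by simp
      qed
      show "0 \<le> ((real n)^2 - real n - 1)/(real n)^2" using K0 by simp
    qed
    finally have "sqrt (\<Sum>i=2..n. (?M 1 - ?M i)^2)
        \<le> sqrt (((real n)^2 - real n - 1)/(real n)^2 * (\<Sum>i=2..n. (f 1 - f i)^2))"
      by (rule real_sqrt_le_mono)
    then show ?thesis unfolding var_star Keq using sqrt_factor[OF n0 K0] by simp
  qed
  have part2: "\<exists>f :: nat \<Rightarrow> real.
               var_p (star_E n) 2 (maximal_op (star_V n) (star_E n) f)
                 > C * var_p (star_E n) 2 f"
    if C: "C < sqrt ((real n - 1)^2 + real n - 2) / real n" for C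
  proof -
    define f :: "nat \<Rightarrow> real" where
      "f i = (if i = 1 then real n - 1 else if i = 2 then 2 * (real n - 1) else real n - 2)" for i
    let ?M = "maximal_op (star_V n) (star_E n) f"
    have fpos: "\<bar>f i\<bar> = f i" for i unfolding f_def using rn3 by auto
    have s3: "(\<Sum>i=3..n. g i) = (\<Sum>i=3..n. c)" if "\<And>i. i \<ge> 3 \<Longrightarrow> g i = c" for g :: "nat \<Rightarrow> real" and c
      using that by (intro sum.cong) auto
    have split: "(\<Sum>i=2..n. g i) = g 2 + (\<Sum>i=3..n. g i)" for g :: "nat \<Rightarrow> real"
      using n2 by (simp add: sum.atLeast_Suc_atMost numeral_3_eq_3 numeral_2_eq_2)
    have c3: "real (card {3..n}) = real n - 2" using assms by simp
    have sumf: "(\<Sum>i=2..n. \<bar>f i\<bar>) = 2 * (real n - 1) + (real n - 2) * (real n - 2)"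
      unfolding split fpos using s3[of f "real n - 2"] c3 by (simp add: f_def)
    define A where "A = (\<bar>f 1\<bar> + (\<Sum>i=2..n. \<bar>f i\<bar>)) / real n"
    have "real n * A = \<bar>f 1\<bar> + (\<Sum>i=2..n. \<bar>f i\<bar>)" unfolding A_def using n0 by simp
    also have "\<dots> = (real n)^2 - real n + 1" unfolding sumf using rn3
      by (simp add: f_def power2_eq_square algebra_simps)
    finally have nA: "real n * A = (real n)^2 - real n + 1" .
    have A1: "A > real n - 1"
    proof -
      have "real n * A > real n * (real n - 1)" using nA by (simp add: power2_eq_square algebra_simps)
      then show ?thesis using n0 by simp
    qed
    have A2: "A \<le> 2 * (real n - 1)"
    proof -
      have "real n * A \<le> 2 * (real n * real n) - 2 * real n" using nA nn rn3 unfolding power2_eq_square by linarith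
      then have "real n * A \<le> real n * (2 * (real n - 1))" by (simp add: algebra_simps)
      then show ?thesis using n0 by simp
    qed
    have Mcent: "?M 1 = max \<bar>f 1\<bar> A" unfolding A_def by (rule M_center[OF n2])
    have Mleaf: "?M i = max \<bar>f i\<bar> (max ((\<bar>f 1\<bar> + \<bar>f i\<bar>)/2) A)" if "i \<in> {2..n}" for i
      unfolding A_def by (rule M_leaf[OF n2 that])
    have f1: "\<bar>f 1\<bar> = real n - 1" using fpos[of 1] by (simp add: f_def)
    have f2: "\<bar>f 2\<bar> = 2 * (real n - 1)" using fpos[of 2] by (simp add: f_def)
    have fj: "\<bar>f j\<bar> = real n - 2" if "j \<ge> 3" for j using fpos[of j] that by (simp add: f_def)
    have M1: "?M 1 = A" unfolding Mcent f1 using A1 by simp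
    have two: "(2::nat) \<in> {2..n}" using n2 by simp
    have M2: "?M 2 = 2 * (real n - 1)" unfolding Mleaf[OF two] f1 f2 using A1 A2
      by (simp add: max_def)
    have Mj: "?M j = A" if "j \<in> {3..n}" for j
    proof -
      have "j \<in> {2..n}" "j \<ge> 3" using that by auto
      then show ?thesis unfolding Mleaf[OF \<open>j \<in> {2..n}\<close>] f1 fj[OF \<open>j \<ge> 3\<close>] using A1 rn3
        by (simp add: max_def)
    qed
    have VM: "var_p (star_E n) 2 ?M = ((real n)^2 - real n - 1) / real n"
    proof -
      have "(\<Sum>i=2..n. (?M 1 - ?M i)^2) = (A - 2 * (real n - 1))^2"
        unfolding split M1 M2 using Mj by simp
      moreover have "2 * (real n - 1) - A = ((real n)^2 - real n - 1) / real n"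
        using nA n0 by (simp add: field_simps power2_eq_square)
      moreover have "(A - 2 * (real n - 1))^2 = (2 * (real n - 1) - A)^2" by (rule power2_commute)
      ultimately have "(\<Sum>i=2..n. (?M 1 - ?M i)^2) = (((real n)^2 - real n - 1) / real n)^2"
        by simp
      then show ?thesis unfolding var_star using K0 n0 by simp
    qed
    have Vf: "var_p (star_E n) 2 f = sqrt ((real n)^2 - real n - 1)"
    proof -
      have "(\<Sum>i=2..n. (f 1 - f i)^2) = (real n - 1)^2 + (\<Sum>i=3..n. 1)"
        unfolding split by (simp add: f_def power2_eq_square algebra_simps)
      also have "\<dots> = (real n)^2 - real n - 1" using c3 by (simp add: power2_eq_square algebra_simps)
      finally show ?thesis unfolding var_star by simp
    qed
    have Kpos: "(real n)^2 - real n - 1 > 0" unfolding power2_eq_square using nn rn3 by linarith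
    have "C * var_p (star_E n) 2 f < sqrt ((real n)^2 - real n - 1) / real n * sqrt ((real n)^2 - real n - 1)"
      using C Kpos unfolding Vf Keq by (intro mult_strict_right_mono) auto
    also have "\<dots> = var_p (star_E n) 2 ?M" unfolding VM using Kpos by simp
    finally show ?thesis by blast
  qed
  show ?thesis using part1 part2 by blast
qed

end
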